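(* Let $P$ be an $r$-differential poset with rank sizes $p_n$. Suppose that (a) for every $n\ge1$ and every $1\le j\le n$ one has $\Delta p_n\ge \Delta p_{n-j-\delta_{r,1}}$, and (b) for every $n\ge 0$ the matrix $DU_n+tI\in\mathbb{Z}[t]^{p_n\times p_n}$ has a Smith form over $\mathbb{Z}[t]$. Then for every $n\ge0$ the cokernel of $U_n:\mathbb{Z}^{p_n}\to\mathbb{Z}^{p_{n+1}}$ is a free abelian group (equivalently, the Smith form of $U_n$ over $\mathbb{Z}$ has only zeroes and ones on its diagonal).
   Context: For a positive integer $r$, an $r$-differential poset is a graded poset with a minimum element, all of whose intervals and rank sets are finite, such that (D1) if an element covers exactly $m$ elements then it is covered by exactly $m+r$ elements, and (D2) if two distinct elements have exactly $m$ elements that they both cover, then exactly $m$ elements cover them both. $P_n$ is the set of elements of rank $n$, $p_n:=|P_n|$, $p_k:=0$ for $k<0$, $\Delta p_n:=p_n-p_{n-1}$, and $\delta_{r,1}$ is the Kronecker delta. The up map $U_n:\mathbb{Z}^{P_n}\to\mathbb{Z}^{P_{n+1}}$ sends each basis element $x$ to the sum of the elements covering $x$; the down map $D_n:\mathbb{Z}^{P_n}\to\mathbb{Z}^{P_{n-1}}$ sends $x$ to the sum of the elements covered by $x$; $DU_n:=D_{n+1}U_n$ as a $p_n\times p_n$ integer matrix. A matrix over a commutative ring $S$ is in Smith form if it is diagonal with diagonal entries $s_1,s_2,\dots$ satisfying $s_i\mid s_{i+1}$; it has a Smith form over $S$ if it becomes one after multiplication on the left and right by invertible matrices over $S$. 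*)

theory Defs
  imports "Jordan_Normal_Form.Matrix" "HOL-Computational_Algebra.Polynomial"
begin

text \<open>The poset is the whole carrier of a type of class order.\<close>

definition covers :: "'a::order \<Rightarrow> 'a \<Rightarrow> bool" where
  "covers y x \<longleftrightarrow> x < y \<and> \<not> (\<exists>z. x < z \<and> z < y)"

definition rank_set :: "('a \<Rightarrow> nat) \<Rightarrow> nat \<Rightarrow> 'a set" where
  "rank_set rk n = {x. rk x = n}"

definition graded_poset_min :: "('a::order \<Rightarrow> nat) \<Rightarrow> bool" where
  "graded_poset_min rk \<longleftrightarrow>
     (\<exists>m. (\<forall>x. m \<le> x) \<and> rk m = 0) \<and>
     (\<forall>x y::'a. finite {z. x \<le> z \<and> z \<le> y}) \<and>
     (\<forall>x y. covers y x \<longrightarrow> rk y = Suc (rk x)) \<and>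
     (\<forall>n. finite (rank_set rk n))"

definition differential_poset :: "nat \<Rightarrow> ('a::order \<Rightarrow> nat) \<Rightarrow> bool" where
  "differential_poset r rk \<longleftrightarrow> r > 0 \<and> graded_poset_min rk \<and>
     (\<forall>x::'a. card {y. covers y x} = card {y. covers x y} + r) \<and>
     (\<forall>x y::'a. x \<noteq> y \<longrightarrow>
        card {z. covers z x \<and> covers z y} = card {z. covers x z \<and> covers y z})"

definition rank_size :: "('a \<Rightarrow> nat) \<Rightarrow> int \<Rightarrow> int" where
  "rank_size rk k = (if k < 0 then 0 else int (card (rank_set rk (nat k))))"

definition delta_p :: "('a \<Rightarrow> nat) \<Rightarrow> int \<Rightarrow> int" where
  "delta_p rk k = rank_size rk k - rank_size rk (k - 1)"

text \<open>A fixed enumeration of the rank set P_n (basis ordering of Z^{P_n}).\<close>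
definition rank_enum :: "('a \<Rightarrow> nat) \<Rightarrow> nat \<Rightarrow> nat \<Rightarrow> 'a" where
  "rank_enum rk n = (SOME f. bij_betw f {..<card (rank_set rk n)} (rank_set rk n))"

definition U_mat :: "('a::order \<Rightarrow> nat) \<Rightarrow> nat \<Rightarrow> int mat" where
  "U_mat rk n = mat (card (rank_set rk (Suc n))) (card (rank_set rk n))
     (\<lambda>(i,j). if covers (rank_enum rk (Suc n) i) (rank_enum rk n j) then 1 else 0)"

text \<open>D_{n+1} : Z^{P_{n+1}} -> Z^{P_n}.\<close>
definition D_mat :: "('a::order \<Rightarrow> nat) \<Rightarrow> nat \<Rightarrow> int mat" where
  "D_mat rk n = mat (card (rank_set rk n)) (card (rank_set rk (Suc n)))
     (\<lambda>(i,j). if covers (rank_enum rk (Suc n) j) (rank_enum rk n i) then 1 else 0)"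

definition DU_mat :: "('a::order \<Rightarrow> nat) \<Rightarrow> nat \<Rightarrow> int mat" where
  "DU_mat rk n = D_mat rk n * U_mat rk n"

definition in_Smith_form :: "'a::comm_ring_1 mat \<Rightarrow> bool" where
  "in_Smith_form A \<longleftrightarrow>
     (\<forall>i j. i < dim_row A \<and> j < dim_col A \<and> i \<noteq> j \<longrightarrow> A $$ (i,j) = 0) \<and>
     (\<forall>i. Suc i < min (dim_row A) (dim_col A) \<longrightarrow> A $$ (i,i) dvd A $$ (Suc i, Suc i))"

definition has_Smith_form :: "'a::comm_ring_1 mat \<Rightarrow> bool" where
  "has_Smith_form A \<longleftrightarrow> (\<exists>P Q. P \<in> carrier_mat (dim_row A) (dim_row A) \<and>
     Q \<in> carrier_mat (dim_col A) (dim_col A) \<and> invertible_mat P \<and> invertible_mat Q \<and>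
     in_Smith_form (P * A * Q))"

end

theory Submission
  imports Defs "Jordan_Normal_Form.Char_Poly"
begin

locale dposet =
  fixes r :: nat and rk :: "'a::order \<Rightarrow> nat"
  assumes dp: "differential_poset r rk"
begin

abbreviation pp :: "nat \<Rightarrow> nat" where "pp n \<equiv> card (rank_set rk n)"
abbreviation en :: "nat \<Rightarrow> nat \<Rightarrow> 'a" where "en n \<equiv> rank_enum rk n"

lemma r_pos: "r > 0" using dp unfolding differential_poset_def by auto
lemma graded: "graded_poset_min rk" using dp unfolding differential_poset_def by auto
lemma up_card: "card {y. covers y (x::'a)} = card {y. covers x y} + r"
  using dp unfolding differential_poset_def by simp
lemma D2: "(x::'a) \<noteq> y \<Longrightarrow> card {z. covers z x \<and> covers z y} = card {z. covers x z \<and> covers y z}"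
  using dp unfolding differential_poset_def by blast
lemma cov_rank: "covers y x \<Longrightarrow> rk y = Suc (rk x)"
  using graded unfolding graded_poset_min_def by auto
lemma fin_rank: "finite (rank_set rk n)"
  using graded unfolding graded_poset_min_def by auto
lemma fin_int: "finite {z. (x::'a) \<le> z \<and> z \<le> y}"
  using graded unfolding graded_poset_min_def by blast

definition m0 :: 'a where "m0 = (SOME m. (\<forall>x. m \<le> x) \<and> rk m = 0)"
lemma m0: "\<forall>x. m0 \<le> x" "rk m0 = 0"
proof -
  have "\<exists>m. (\<forall>x. m \<le> x) \<and> rk m = 0" using graded unfolding graded_poset_min_def by auto
  from someI_ex[OF this] show "\<forall>x. m0 \<le> x" "rk m0 = 0" unfolding m0_def by auto
qed

lemma rank0: assumes "rk x = 0" shows "x = m0"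
proof (rule ccontr)
  assume ne: "x \<noteq> m0"
  have lt: "m0 < x" using m0(1) ne by (metis le_neq_trans)
  define T where "T = {z. m0 \<le> z \<and> z < x}"
  have sub: "T \<subseteq> {z. m0 \<le> z \<and> z \<le> x}" unfolding T_def by (blast intro: less_imp_le)
  have fT: "finite T" by (rule finite_subset[OF sub fin_int])
  have "m0 \<in> T" using lt unfolding T_def by blast
  hence "T \<noteq> {}" by blast
  then obtain z where z: "z \<in> T" and zm: "\<forall>b\<in>T. z \<le> b \<longrightarrow> z = b"
    using finite_has_maximal[OF fT] by metis
  have zx: "z < x" using z unfolding T_def by blast
  have nw: "\<not> (\<exists>w. z < w \<and> w < x)"
  proof
    assume "\<exists>w. z < w \<and> w < x"
    then obtain w where w: "z < w" "w < x" by blast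
    have "m0 \<le> w" using m0(1) by blast
    hence "w \<in> T" using w unfolding T_def by blast
    with zm w(1) have "z = w" by (metis less_imp_le)
    with w(1) show False by simp
  qed
  have "covers x z" unfolding covers_def using zx nw by blast
  from cov_rank[OF this] assms show False by simp
qed

lemma rank_set0: "rank_set rk 0 = {m0}"
  unfolding rank_set_def using rank0 m0(2) by blast

lemma pp0: "pp 0 = 1" by (simp add: rank_set0)

lemma no_below_m0: "\<not> covers m0 w"
proof
  assume "covers m0 w" hence "w < m0" by (simp add: covers_def)
  with m0(1) show False by (metis leD)
qed

lemma en_bij: "bij_betw (en n) {..<pp n} (rank_set rk n)"
proof -
  have "\<exists>f. bij_betw f {..<pp n} (rank_set rk n)"
    using ex_bij_betw_nat_finite[OF fin_rank[of n]] by (simp add: atLeast0LessThan)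
  from someI_ex[OF this] show ?thesis unfolding rank_enum_def .
qed

lemma en_rank: "i < pp n \<Longrightarrow> rk (en n i) = n"
  using en_bij[of n] unfolding bij_betw_def rank_set_def by auto

lemma en_inj: "i < pp n \<Longrightarrow> j < pp n \<Longrightarrow> en n i = en n j \<Longrightarrow> i = j"
  using en_bij[of n] unfolding bij_betw_def inj_on_def by auto

lemma sum_enum: assumes "bij_betw f {..<(n::nat)} S"
  shows "(\<Sum>k<n. if Q (f k) then 1 else 0::int) = int (card {z\<in>S. Q z})"
proof -
  have fS: "finite S" using bij_betw_finite[OF assms] by simp
  have "(\<Sum>k<n. if Q (f k) then 1 else 0::int) = (\<Sum>z\<in>S. if Q z then 1 else 0)"
    by (rule sum.reindex_bij_betw[OF assms, of "\<lambda>z. if Q z then 1 else (0::int)"])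
  also have "\<dots> = (\<Sum>z\<in>{z\<in>S. Q z}. 1)" by (rule sum.inter_filter[OF fS, symmetric])
  also have "\<dots> = int (card {z\<in>S. Q z})" by simp
  finally show ?thesis .
qed

lemma U_dims: "U_mat rk n \<in> carrier_mat (pp (Suc n)) (pp n)" by (simp add: U_mat_def)
lemma D_dims: "D_mat rk n \<in> carrier_mat (pp n) (pp (Suc n))" by (simp add: D_mat_def)
lemma DU_dims: "DU_mat rk n \<in> carrier_mat (pp n) (pp n)" unfolding DU_mat_def using D_dims U_dims by (rule mult_carrier_mat)

lemma D_transpose: "D_mat rk n = transpose_mat (U_mat rk n)"
  by (rule eq_matI, auto simp: D_mat_def U_mat_def)

lemma DU_entry: assumes "i < pp n" "j < pp n"
  shows "DU_mat rk n $$ (i,j) = int (card {z. covers z (en n i) \<and> covers z (en n j)})"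
proof -
  have "DU_mat rk n $$ (i,j) = (\<Sum>k<pp (Suc n). (if covers (en (Suc n) k) (en n i) then 1 else 0) *
     (if covers (en (Suc n) k) (en n j) then 1 else 0::int))"
    using assms by (simp add: DU_mat_def D_mat_def U_mat_def scalar_prod_def atLeast0LessThan)
  also have "\<dots> = (\<Sum>k<pp (Suc n). if covers (en (Suc n) k) (en n i) \<and> covers (en (Suc n) k) (en n j) then 1 else 0)"
    by (rule sum.cong, auto)
  also have "\<dots> = int (card {z\<in>rank_set rk (Suc n). covers z (en n i) \<and> covers z (en n j)})"
    by (rule sum_enum[OF en_bij])
  also have "{z\<in>rank_set rk (Suc n). covers z (en n i) \<and> covers z (en n j)} = {z. covers z (en n i) \<and> covers z (en n j)}"
    using cov_rank en_rank[OF assms(1)] by (auto simp: rank_set_def)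
  finally show ?thesis .
qed

lemma UD_entry: assumes "i < pp (Suc n)" "j < pp (Suc n)"
  shows "(U_mat rk n * D_mat rk n) $$ (i,j) = int (card {w. covers (en (Suc n) i) w \<and> covers (en (Suc n) j) w})"
proof -
  have "(U_mat rk n * D_mat rk n) $$ (i,j) = (\<Sum>k<pp n. (if covers (en (Suc n) i) (en n k) then 1 else 0) *
     (if covers (en (Suc n) j) (en n k) then 1 else 0::int))"
    using assms by (simp add: D_mat_def U_mat_def scalar_prod_def atLeast0LessThan)
  also have "\<dots> = (\<Sum>k<pp n. if covers (en (Suc n) i) (en n k) \<and> covers (en (Suc n) j) (en n k) then 1 else 0)"
    by (rule sum.cong, auto)
  also have "\<dots> = int (card {w\<in>rank_set rk n. covers (en (Suc n) i) w \<and> covers (en (Suc n) j) w})"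
    by (rule sum_enum[OF en_bij])
  also have "{w\<in>rank_set rk n. covers (en (Suc n) i) w \<and> covers (en (Suc n) j) w} = {w. covers (en (Suc n) i) w \<and> covers (en (Suc n) j) w}"
    using cov_rank en_rank[OF assms(1)] by (auto simp: rank_set_def)
  finally show ?thesis .
qed

lemma DU0: "DU_mat rk 0 = of_nat r \<cdot>\<^sub>m 1\<^sub>m (pp 0)"
proof (rule eq_matI)
  fix i j assume ij: "i < dim_row (of_nat r \<cdot>\<^sub>m 1\<^sub>m (pp 0) :: int mat)" "j < dim_col (of_nat r \<cdot>\<^sub>m 1\<^sub>m (pp 0) :: int mat)"
  hence i0: "i = 0" "j = 0" using pp0 by auto
  have e: "en 0 0 = m0" using rank0[OF en_rank[of 0 0]] pp0 by simp
  show "DU_mat rk 0 $$ (i,j) = (of_nat r \<cdot>\<^sub>m 1\<^sub>m (pp 0)) $$ (i,j)"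
    using DU_entry[of 0 0 0] pp0 i0 e up_card[of m0] no_below_m0 by simp
qed (insert DU_dims[of 0], auto)

lemma DU_Suc: "DU_mat rk (Suc n) = U_mat rk n * D_mat rk n + of_nat r \<cdot>\<^sub>m 1\<^sub>m (pp (Suc n))"
proof (rule eq_matI)
  fix i j assume ij: "i < dim_row (U_mat rk n * D_mat rk n + of_nat r \<cdot>\<^sub>m 1\<^sub>m (pp (Suc n)))"
     "j < dim_col (U_mat rk n * D_mat rk n + of_nat r \<cdot>\<^sub>m 1\<^sub>m (pp (Suc n)))"
  hence ij': "i < pp (Suc n)" "j < pp (Suc n)" by (auto simp: U_mat_def)
  have lhs: "DU_mat rk (Suc n) $$ (i,j) = int (card {z. covers z (en (Suc n) i) \<and> covers z (en (Suc n) j)})"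
    by (rule DU_entry[OF ij'])
  have rhs: "(U_mat rk n * D_mat rk n + of_nat r \<cdot>\<^sub>m 1\<^sub>m (pp (Suc n))) $$ (i,j) =
     int (card {w. covers (en (Suc n) i) w \<and> covers (en (Suc n) j) w}) + (if i = j then int r else 0)"
    using ij' UD_entry[OF ij'] by (simp add: U_mat_def D_mat_def)
  show "DU_mat rk (Suc n) $$ (i,j) = (U_mat rk n * D_mat rk n + of_nat r \<cdot>\<^sub>m 1\<^sub>m (pp (Suc n))) $$ (i,j)"
  proof (cases "i = j")
    case True
    then show ?thesis unfolding lhs rhs using up_card[of "en (Suc n) j"] by simp
  next
    case False
    hence "en (Suc n) i \<noteq> en (Suc n) j" using en_inj ij' by blast
    then show ?thesis unfolding lhs rhs using D2 False by simp
  qed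
qed (insert DU_dims[of "Suc n"], auto simp: U_mat_def)

end


lemma inj_le: fixes V :: "'f::field mat"
  assumes V: "V \<in> carrier_mat p c" and inj: "\<And>a. a \<in> carrier_vec c \<Longrightarrow> V *\<^sub>v a = 0\<^sub>v p \<Longrightarrow> a = 0\<^sub>v c"
  shows "c \<le> p"
proof (rule ccontr)
  assume "\<not> c \<le> p" hence pc: "p < c" by simp
  define cc where "cc = (\<lambda>i. if i < p then row V i else 0\<^sub>v c)"
  define W where "W = mat\<^sub>r c c (\<lambda>i. if i = p then 0\<^sub>v c else cc i)"
  have det: "det W = 0" unfolding W_def
    by (rule det_row_0[OF pc], insert V, auto simp: cc_def)
  have Wc: "W \<in> carrier_mat c c" unfolding W_def by simp
  obtain v where v: "v \<in> carrier_vec c" "v \<noteq> 0\<^sub>v c" "W *\<^sub>v v = 0\<^sub>v c"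
    using det_0_iff_vec_prod_zero_field[OF Wc] det by auto
  have "V *\<^sub>v v = 0\<^sub>v p"
  proof (rule eq_vecI)
    fix i assume "i < dim_vec (0\<^sub>v p :: 'f vec)" hence i: "i < p" by simp
    have "(W *\<^sub>v v) $ i = 0" using v(3) i pc by simp
    moreover have "(W *\<^sub>v v) $ i = row V i \<bullet> v" using i pc V Wc by (simp add: W_def cc_def)
    ultimately show "(V *\<^sub>v v) $ i = 0\<^sub>v p $ i" using i V by simp
  qed (use V in simp)
  with inj v show False by blast
qed

lemma concat_le: fixes V U :: "'f::field mat"
  assumes V: "V \<in> carrier_mat p c" and U: "U \<in> carrier_mat p q"
  and inj: "\<And>a b. a \<in> carrier_vec c \<Longrightarrow> b \<in> carrier_vec q \<Longrightarrow> V *\<^sub>v a + U *\<^sub>v b = 0\<^sub>v p \<Longrightarrow> a = 0\<^sub>v c \<and> b = 0\<^sub>v q"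
  shows "c + q \<le> p"
proof (rule inj_le)
  define W where "W = mat p (c+q) (\<lambda>(i,j). if j < c then V $$ (i,j) else U $$ (i,j-c))"
  show Wc: "W \<in> carrier_mat p (c+q)" unfolding W_def by simp
  fix x :: "'f vec" assume x: "x \<in> carrier_vec (c+q)" and Wx: "W *\<^sub>v x = 0\<^sub>v p"
  define a where "a = vec c (\<lambda>j. x $ j)"
  define b where "b = vec q (\<lambda>j. x $ (c+j))"
  have ab: "a \<in> carrier_vec c" "b \<in> carrier_vec q" unfolding a_def b_def by auto
  have "V *\<^sub>v a + U *\<^sub>v b = W *\<^sub>v x"
  proof (rule eq_vecI)
    fix i assume "i < dim_vec (W *\<^sub>v x)" hence i: "i < p" using Wc by simp
    have "(W *\<^sub>v x) $ i = (\<Sum>j\<in>{0..<c+q}. W $$ (i,j) * x $ j)"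
      using i x Wc by (simp add: scalar_prod_def)
    also have "\<dots> = (\<Sum>j\<in>{0..<c}. W $$ (i,j) * x $ j) + (\<Sum>j\<in>{c..<c+q}. W $$ (i,j) * x $ j)"
      by (rule sum.atLeastLessThan_concat[symmetric], auto)
    also have "(\<Sum>j\<in>{c..<c+q}. W $$ (i,j) * x $ j) = (\<Sum>j\<in>{0..<q}. W $$ (i,j+c) * x $ (j+c))"
      using sum.shift_bounds_nat_ivl[of "\<lambda>j. W $$ (i,j) * x $ j" 0 c q] by (simp add: add.commute)
    also have "\<dots> = (\<Sum>j\<in>{0..<q}. U $$ (i,j) * b $ j)"
      by (rule sum.cong, auto simp: W_def b_def i add.commute)
    also have "(\<Sum>j\<in>{0..<c}. W $$ (i,j) * x $ j) = (\<Sum>j\<in>{0..<c}. V $$ (i,j) * a $ j)"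
      by (rule sum.cong, auto simp: W_def a_def i)
    finally show "(V *\<^sub>v a + U *\<^sub>v b) $ i = (W *\<^sub>v x) $ i"
      using i V U ab by (simp add: scalar_prod_def)
  qed (use V U Wc in simp)
  with Wx have "a = 0\<^sub>v c \<and> b = 0\<^sub>v q" using inj[OF ab] by simp
  thus "x = 0\<^sub>v (c+q)"
  proof -
    assume ab0: "a = 0\<^sub>v c \<and> b = 0\<^sub>v q"
    show ?thesis
    proof (rule eq_vecI)
      fix j assume "j < dim_vec (0\<^sub>v (c + q) :: 'f vec)" hence j: "j < c + q" by simp
      show "x $ j = 0\<^sub>v (c + q) $ j"
      proof (cases "j < c")
        case True
        then show ?thesis using ab0 j unfolding a_def by (metis index_vec index_zero_vec(1))
      next
        case False
        hence "j - c < q" using j by simp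
        then show ?thesis using ab0 j False unfolding b_def
          by (metis add_diff_inverse_nat index_vec index_zero_vec(1))
      qed
    qed (use x in simp)
  qed
qed


context dposet begin

definition Uc :: "nat \<Rightarrow> complex mat" where "Uc n = map_mat of_int (U_mat rk n)"
definition Dc :: "nat \<Rightarrow> complex mat" where "Dc n = map_mat of_int (D_mat rk n)"
definition Ac :: "nat \<Rightarrow> complex mat" where "Ac n = map_mat of_int (DU_mat rk n)"

lemma Uc_dims: "Uc n \<in> carrier_mat (pp (Suc n)) (pp n)" using U_dims[of n] by (simp add: Uc_def)
lemma Dc_dims: "Dc n \<in> carrier_mat (pp n) (pp (Suc n))" using D_dims[of n] by (simp add: Dc_def)
lemma Ac_dims: "Ac n \<in> carrier_mat (pp n) (pp n)" using DU_dims[of n] by (simp add: Ac_def)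

lemma Ac_DU: "Ac n = Dc n * Uc n"
  unfolding Ac_def Dc_def Uc_def DU_mat_def by (rule of_int_hom.mat_hom_mult[OF D_dims U_dims])

lemma UD_c: "map_mat of_int (U_mat rk n * D_mat rk n) = Uc n * Dc n"
  unfolding Dc_def Uc_def by (rule of_int_hom.mat_hom_mult[OF U_dims D_dims])

lemma Ac_Suc: "Ac (Suc n) = Uc n * Dc n + of_nat r \<cdot>\<^sub>m 1\<^sub>m (pp (Suc n))"
proof (rule eq_matI)
  fix i j assume ij: "i < dim_row (Uc n * Dc n + of_nat r \<cdot>\<^sub>m 1\<^sub>m (pp (Suc n)))"
     "j < dim_col (Uc n * Dc n + of_nat r \<cdot>\<^sub>m 1\<^sub>m (pp (Suc n)))"
  hence ij': "i < pp (Suc n)" "j < pp (Suc n)" using Uc_dims Dc_dims by auto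
  have UDd: "U_mat rk n * D_mat rk n \<in> carrier_mat (pp (Suc n)) (pp (Suc n))"
    using mult_carrier_mat[OF U_dims D_dims] .
  have d: "dim_row (U_mat rk n * D_mat rk n + of_nat r \<cdot>\<^sub>m 1\<^sub>m (pp (Suc n))) = pp (Suc n)"
    "dim_col (U_mat rk n * D_mat rk n + of_nat r \<cdot>\<^sub>m 1\<^sub>m (pp (Suc n))) = pp (Suc n)" using UDd by auto
  have "Ac (Suc n) $$ (i,j) = of_int ((U_mat rk n * D_mat rk n + of_nat r \<cdot>\<^sub>m 1\<^sub>m (pp (Suc n))) $$ (i,j))"
    unfolding Ac_def DU_Suc using ij' d by simp
  also have "\<dots> = of_int ((U_mat rk n * D_mat rk n) $$ (i,j)) + of_int ((of_nat r \<cdot>\<^sub>m 1\<^sub>m (pp (Suc n)) :: int mat) $$ (i,j))"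
    using ij' UDd by simp
  also have "of_int ((U_mat rk n * D_mat rk n) $$ (i,j)) = (Uc n * Dc n) $$ (i,j)"
    using UD_c ij' UDd by (metis index_map_mat(1) carrier_matD(1,2))
  also have "of_int ((of_nat r \<cdot>\<^sub>m 1\<^sub>m (pp (Suc n)) :: int mat) $$ (i,j)) = (of_nat r \<cdot>\<^sub>m 1\<^sub>m (pp (Suc n)) :: complex mat) $$ (i,j)"
    using ij' by simp
  finally show "Ac (Suc n) $$ (i,j) = (Uc n * Dc n + of_nat r \<cdot>\<^sub>m 1\<^sub>m (pp (Suc n))) $$ (i,j)"
    using ij' Uc_dims Dc_dims by simp
qed (insert Ac_dims[of "Suc n"] Uc_dims Dc_dims, auto)

lemma Ac0: "Ac 0 = of_nat r \<cdot>\<^sub>m 1\<^sub>m (pp 0)"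
  unfolding Ac_def DU0 by (rule eq_matI, auto)

lemma Ac_vec: "b \<in> carrier_vec (pp n) \<Longrightarrow> Ac n *\<^sub>v b = Dc n *\<^sub>v (Uc n *\<^sub>v b)"
  unfolding Ac_DU using Dc_dims Uc_dims by (metis assoc_mult_mat_vec)

lemma AcS_vec: assumes w: "w \<in> carrier_vec (pp (Suc n))"
  shows "Ac (Suc n) *\<^sub>v w = Uc n *\<^sub>v (Dc n *\<^sub>v w) + of_nat r \<cdot>\<^sub>v w"
proof -
  have UD: "Uc n * Dc n \<in> carrier_mat (pp (Suc n)) (pp (Suc n))" using mult_carrier_mat[OF Uc_dims Dc_dims] .
  have "Ac (Suc n) *\<^sub>v w = (Uc n * Dc n) *\<^sub>v w + (of_nat r \<cdot>\<^sub>m 1\<^sub>m (pp (Suc n))) *\<^sub>v w"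
    unfolding Ac_Suc by (rule add_mult_distrib_mat_vec[OF UD _ w], simp)
  also have "(Uc n * Dc n) *\<^sub>v w = Uc n *\<^sub>v (Dc n *\<^sub>v w)" using Uc_dims Dc_dims w by (metis assoc_mult_mat_vec)
  also have "(of_nat r \<cdot>\<^sub>m 1\<^sub>m (pp (Suc n))) *\<^sub>v w = (of_nat r :: complex) \<cdot>\<^sub>v (1\<^sub>m (pp (Suc n)) *\<^sub>v w)"
    using w by auto
  also have "1\<^sub>m (pp (Suc n)) *\<^sub>v w = w" using w by simp
  finally show ?thesis .
qed

definition EIGP :: "nat \<Rightarrow> bool" where
  "EIGP N \<longleftrightarrow> (\<forall>(lam::complex) c V. V \<in> carrier_mat (pp N) c \<longrightarrow> 0 < c \<longrightarrow>
     (\<forall>a\<in>carrier_vec c. V *\<^sub>v a = 0\<^sub>v (pp N) \<longrightarrow> a = 0\<^sub>v c) \<longrightarrow>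
     (\<forall>a\<in>carrier_vec c. Ac N *\<^sub>v (V *\<^sub>v a) = lam \<cdot>\<^sub>v (V *\<^sub>v a)) \<longrightarrow>
     (\<exists>k\<le>N. lam = of_nat (r*(k+1)) \<and> c + (if k = N then 0 else pp (N-k-1)) \<le> pp (N-k)))"

lemma smult_zero_vec: fixes b :: "'f::field vec"
  assumes "k \<cdot>\<^sub>v b = 0\<^sub>v n" "b \<noteq> 0\<^sub>v n" "b \<in> carrier_vec n" shows "k = 0"
proof -
  obtain i where i: "i < n" "b $ i \<noteq> 0" using assms(2,3) by (metis eq_vecI carrier_vecD index_zero_vec(1,2))
  have "(k \<cdot>\<^sub>v b) $ i = 0" using assms(1) i by simp
  thus ?thesis using i assms(3) by simp
qed

lemma smult_eq_vec: fixes w :: "'f::field vec"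
  assumes "k \<cdot>\<^sub>v w = l \<cdot>\<^sub>v w" "k \<noteq> l" "w \<in> carrier_vec n" shows "w = 0\<^sub>v n"
proof (rule eq_vecI)
  fix i assume "i < dim_vec (0\<^sub>v n :: 'f vec)" hence i: "i < n" by simp
  have "(k \<cdot>\<^sub>v w) $ i = (l \<cdot>\<^sub>v w) $ i" using assms(1) by simp
  hence "k * w $ i = l * w $ i" using i assms(3) by simp
  hence "(k - l) * w $ i = 0" by (simp add: algebra_simps)
  thus "w $ i = 0\<^sub>v n $ i" using assms(2) i by simp
qed (use assms(3) in simp)

lemma kernel_triv: assumes E: "EIGP n" and b: "b \<in> carrier_vec (pp n)" and Ab: "Ac n *\<^sub>v b = 0\<^sub>v (pp n)"
  shows "b = 0\<^sub>v (pp n)"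
proof (rule ccontr)
  assume nz: "b \<noteq> 0\<^sub>v (pp n)"
  define V where "V = mat (pp n) 1 (\<lambda>(i,j). b $ i)"
  have Vc: "V \<in> carrier_mat (pp n) 1" unfolding V_def by simp
  have Va: "V *\<^sub>v a = a $ 0 \<cdot>\<^sub>v b" if a: "a \<in> carrier_vec 1" for a
    by (rule eq_vecI, insert a b, auto simp: V_def scalar_prod_def)
  have inj: "\<forall>a\<in>carrier_vec 1. V *\<^sub>v a = 0\<^sub>v (pp n) \<longrightarrow> a = 0\<^sub>v 1"
  proof (intro ballI impI)
    fix a :: "complex vec" assume a: "a \<in> carrier_vec 1" and Z: "V *\<^sub>v a = 0\<^sub>v (pp n)"
    have "a $ 0 = 0" using smult_zero_vec[OF Z[unfolded Va[OF a]] nz b] .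
    thus "a = 0\<^sub>v 1" using a by (intro eq_vecI, auto)
  qed
  have eig: "\<forall>a\<in>carrier_vec 1. Ac n *\<^sub>v (V *\<^sub>v a) = 0 \<cdot>\<^sub>v (V *\<^sub>v a)"
  proof
    fix a :: "complex vec" assume a: "a \<in> carrier_vec 1"
    have "Ac n *\<^sub>v (V *\<^sub>v a) = a $ 0 \<cdot>\<^sub>v (Ac n *\<^sub>v b)" unfolding Va[OF a]
      by (rule mult_mat_vec[OF Ac_dims b])
    also have "\<dots> = 0\<^sub>v (pp n)" unfolding Ab by (intro eq_vecI, auto)
    also have "\<dots> = 0 \<cdot>\<^sub>v (V *\<^sub>v a)" using Vc by (intro eq_vecI, auto)
    finally show "Ac n *\<^sub>v (V *\<^sub>v a) = 0 \<cdot>\<^sub>v (V *\<^sub>v a)" .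
  qed
  from E[unfolded EIGP_def, rule_format, of V 1 0] Vc inj eig obtain k where
    "(0::complex) = of_nat (r * (k+1))" by auto
  hence "r * (k+1) = 0" by (metis of_nat_0 of_nat_eq_iff)
  thus False using r_pos by simp
qed

end


lemma vec_solve: fixes X w :: "'f::field vec"
  assumes "X \<in> carrier_vec n" "w \<in> carrier_vec n" "X + k \<cdot>\<^sub>v w = l \<cdot>\<^sub>v w"
  shows "X = (l - k) \<cdot>\<^sub>v w"
proof (rule eq_vecI)
  fix i assume "i < dim_vec ((l - k) \<cdot>\<^sub>v w)" hence i: "i < n" using assms by simp
  have "(X + k \<cdot>\<^sub>v w) $ i = (l \<cdot>\<^sub>v w) $ i" using assms(3) by simp
  hence "X $ i + k * w $ i = l * w $ i" using i assms(1,2) by simp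
  thus "X $ i = ((l - k) \<cdot>\<^sub>v w) $ i" using i assms by (simp add: algebra_simps)
qed (use assms in simp)

lemma zero_smult_v: "w \<in> carrier_vec n \<Longrightarrow> (0::'a::comm_ring_1) \<cdot>\<^sub>v w = 0\<^sub>v n"
  unfolding carrier_vec_def by (intro eq_vecI) auto

lemma mv_car: "A \<in> carrier_mat nr nc \<Longrightarrow> A *\<^sub>v v \<in> carrier_vec nr"
  unfolding carrier_mat_def carrier_vec_def by simp

context dposet begin

lemma eigp: "EIGP N"
proof (induction N)
  case 0
  show ?case unfolding EIGP_def
  proof (intro allI impI)
    fix lam :: complex and c V
    assume Vc: "V \<in> carrier_mat (pp 0) c" and c: "0 < c"
      and inj: "\<forall>a\<in>carrier_vec c. V *\<^sub>v a = 0\<^sub>v (pp 0) \<longrightarrow> a = 0\<^sub>v c"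
      and eig: "\<forall>a\<in>carrier_vec c. Ac 0 *\<^sub>v (V *\<^sub>v a) = lam \<cdot>\<^sub>v (V *\<^sub>v a)"
    define a :: "complex vec" where "a = unit_vec c 0"
    have a: "a \<in> carrier_vec c" unfolding a_def by simp
    have anz: "a \<noteq> 0\<^sub>v c"
    proof
      assume "a = 0\<^sub>v c"
      hence "a $ 0 = 0" using c by simp
      thus False using c unfolding a_def by simp
    qed
    define w where "w = V *\<^sub>v a"
    have w: "w \<in> carrier_vec (pp 0)" unfolding w_def by (rule mv_car[OF Vc])
    have wnz: "w \<noteq> 0\<^sub>v (pp 0)" unfolding w_def using inj a anz by blast
    have "Ac 0 *\<^sub>v w = (of_nat r \<cdot>\<^sub>m 1\<^sub>m (pp 0)) *\<^sub>v w" unfolding Ac0 ..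
    also have "\<dots> = (of_nat r :: complex) \<cdot>\<^sub>v (1\<^sub>m (pp 0) *\<^sub>v w)" using w by auto
    also have "1\<^sub>m (pp 0) *\<^sub>v w = w" using w by simp
    finally have "of_nat r \<cdot>\<^sub>v w = lam \<cdot>\<^sub>v w" using eig a unfolding w_def by simp
    hence lam: "lam = of_nat r" using smult_eq_vec[of "of_nat r" w lam "pp 0"] w wnz by auto
    have "c \<le> pp 0" using inj_le[OF Vc] inj by blast
    thus "\<exists>k\<le>0. lam = of_nat (r * (k + 1)) \<and> c + (if k = 0 then 0 else pp (0 - k - 1)) \<le> pp (0 - k)"
      using lam by auto
  qed
next
  case (Suc n)
  note IH = Suc.IH
  show ?case unfolding EIGP_def
  proof (intro allI impI)
    fix lam :: complex and c V
    assume Vc: "V \<in> carrier_mat (pp (Suc n)) c" and c: "0 < c"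
      and inj: "\<forall>a\<in>carrier_vec c. V *\<^sub>v a = 0\<^sub>v (pp (Suc n)) \<longrightarrow> a = 0\<^sub>v c"
      and eig: "\<forall>a\<in>carrier_vec c. Ac (Suc n) *\<^sub>v (V *\<^sub>v a) = lam \<cdot>\<^sub>v (V *\<^sub>v a)"
    have wc: "V *\<^sub>v a \<in> carrier_vec (pp (Suc n))" for a
      using Vc unfolding carrier_vec_def carrier_mat_def by simp
    have key: "Uc n *\<^sub>v (Dc n *\<^sub>v (V *\<^sub>v a)) = (lam - of_nat r) \<cdot>\<^sub>v (V *\<^sub>v a)"
      if a: "a \<in> carrier_vec c" for a
    proof (rule vec_solve)
      show "Uc n *\<^sub>v (Dc n *\<^sub>v (V *\<^sub>v a)) \<in> carrier_vec (pp (Suc n))"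
        using Uc_dims[of n] unfolding carrier_vec_def carrier_mat_def by simp
      show "V *\<^sub>v a \<in> carrier_vec (pp (Suc n))" by (rule wc)
      show "Uc n *\<^sub>v (Dc n *\<^sub>v (V *\<^sub>v a)) + of_nat r \<cdot>\<^sub>v (V *\<^sub>v a) = lam \<cdot>\<^sub>v (V *\<^sub>v a)"
        unfolding AcS_vec[OF wc, symmetric] using eig a by blast
    qed
    have Dc_zero: "Dc n *\<^sub>v 0\<^sub>v (pp (Suc n)) = 0\<^sub>v (pp n)" using Dc_dims[of n] by (intro eq_vecI, auto simp: scalar_prod_def)
    have Uc_zero: "Uc n *\<^sub>v 0\<^sub>v (pp n) = 0\<^sub>v (pp (Suc n))" using Uc_dims[of n] by (intro eq_vecI, auto simp: scalar_prod_def)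
    show "\<exists>k\<le>Suc n. lam = of_nat (r * (k + 1)) \<and>
         c + (if k = Suc n then 0 else pp (Suc n - k - 1)) \<le> pp (Suc n - k)"
    proof (cases "lam = of_nat r")
      case True
      have DV0: "Dc n *\<^sub>v (V *\<^sub>v a) = 0\<^sub>v (pp n)" if a: "a \<in> carrier_vec c" for a
      proof (rule kernel_triv[OF IH])
        show "Dc n *\<^sub>v (V *\<^sub>v a) \<in> carrier_vec (pp n)" by (rule mv_car[OF Dc_dims])
        have "Uc n *\<^sub>v (Dc n *\<^sub>v (V *\<^sub>v a)) = 0\<^sub>v (pp (Suc n))"
          unfolding key[OF a] True by (simp only: diff_self zero_smult_v[OF wc])
        thus "Ac n *\<^sub>v (Dc n *\<^sub>v (V *\<^sub>v a)) = 0\<^sub>v (pp n)"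
          unfolding Ac_vec[OF mv_car[OF Dc_dims]] by (simp only: Dc_zero)
      qed
      have "c + pp n \<le> pp (Suc n)"
      proof (rule concat_le[OF Vc Uc_dims])
        fix a b assume a: "a \<in> carrier_vec c" and b: "b \<in> carrier_vec (pp n)"
          and Z: "V *\<^sub>v a + Uc n *\<^sub>v b = 0\<^sub>v (pp (Suc n))"
        have "Dc n *\<^sub>v (V *\<^sub>v a + Uc n *\<^sub>v b) = Dc n *\<^sub>v (V *\<^sub>v a) + Dc n *\<^sub>v (Uc n *\<^sub>v b)"
          by (rule mult_add_distrib_mat_vec[OF Dc_dims wc mv_car[OF Uc_dims]])
        also have "\<dots> = Ac n *\<^sub>v b" unfolding DV0[OF a] Ac_vec[OF b]
          by (rule left_zero_vec[OF mv_car[OF Dc_dims]])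
        finally have e1: "Dc n *\<^sub>v (V *\<^sub>v a + Uc n *\<^sub>v b) = Ac n *\<^sub>v b" .
        have e2: "Dc n *\<^sub>v (V *\<^sub>v a + Uc n *\<^sub>v b) = 0\<^sub>v (pp n)" unfolding Z by (rule Dc_zero)
        have "Ac n *\<^sub>v b = 0\<^sub>v (pp n)" unfolding e1[symmetric] by (rule e2)
        hence b0: "b = 0\<^sub>v (pp n)" by (rule kernel_triv[OF IH b])
        have "V *\<^sub>v a = V *\<^sub>v a + Uc n *\<^sub>v b" unfolding b0 Uc_zero by (rule right_zero_vec[OF wc, symmetric])
        also have "\<dots> = 0\<^sub>v (pp (Suc n))" by (rule Z)
        finally have "a = 0\<^sub>v c" using inj a by blast
        thus "a = 0\<^sub>v c \<and> b = 0\<^sub>v (pp n)" using b0 by simp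
      qed
      thus ?thesis apply (intro exI[of _ 0]) using True by simp
    next
      case False
      define V' where "V' = Dc n * V"
      have V'c: "V' \<in> carrier_mat (pp n) c" unfolding V'_def using mult_carrier_mat[OF Dc_dims Vc] .
      have V'a: "V' *\<^sub>v a = Dc n *\<^sub>v (V *\<^sub>v a)" if a: "a \<in> carrier_vec c" for a
        unfolding V'_def by (rule assoc_mult_mat_vec[OF Dc_dims Vc a])
      have inj': "\<forall>a\<in>carrier_vec c. V' *\<^sub>v a = 0\<^sub>v (pp n) \<longrightarrow> a = 0\<^sub>v c"
      proof (intro ballI impI)
        fix a :: "complex vec" assume a: "a \<in> carrier_vec c" and Z: "V' *\<^sub>v a = 0\<^sub>v (pp n)"
        have "(lam - of_nat r) \<cdot>\<^sub>v (V *\<^sub>v a) = 0\<^sub>v (pp (Suc n))"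
          using key[OF a] Z[unfolded V'a[OF a]] Uc_zero by simp
        note Z2 = this
        have "V *\<^sub>v a = 0\<^sub>v (pp (Suc n))"
        proof (rule ccontr)
          assume nz: "V *\<^sub>v a \<noteq> 0\<^sub>v (pp (Suc n))"
          have "lam - of_nat r = 0" by (rule smult_zero_vec[OF Z2 nz wc])
          with False show False by simp
        qed
        thus "a = 0\<^sub>v c" using inj a by blast
      qed
      have eig': "\<forall>a\<in>carrier_vec c. Ac n *\<^sub>v (V' *\<^sub>v a) = (lam - of_nat r) \<cdot>\<^sub>v (V' *\<^sub>v a)"
      proof
        fix a :: "complex vec" assume a: "a \<in> carrier_vec c"
        have "Ac n *\<^sub>v (V' *\<^sub>v a) = Dc n *\<^sub>v (Uc n *\<^sub>v (Dc n *\<^sub>v (V *\<^sub>v a)))"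
          unfolding V'a[OF a] by (rule Ac_vec[OF mv_car[OF Dc_dims]])
        also have "\<dots> = Dc n *\<^sub>v ((lam - of_nat r) \<cdot>\<^sub>v (V *\<^sub>v a))" unfolding key[OF a] ..
        also have "\<dots> = (lam - of_nat r) \<cdot>\<^sub>v (Dc n *\<^sub>v (V *\<^sub>v a))" by (rule mult_mat_vec[OF Dc_dims wc])
        finally show "Ac n *\<^sub>v (V' *\<^sub>v a) = (lam - of_nat r) \<cdot>\<^sub>v (V' *\<^sub>v a)" unfolding V'a[OF a] .
      qed
      note H = IH[unfolded EIGP_def, THEN spec[of _ "lam - of_nat r"], THEN spec[of _ c], THEN spec[of _ V'],
        THEN mp, OF V'c, THEN mp, OF c, THEN mp, OF inj', THEN mp, OF eig']
      from H obtain k where k: "k \<le> n" "lam - of_nat r = of_nat (r * (k + 1))"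
        "c + (if k = n then 0 else pp (n - k - 1)) \<le> pp (n - k)" by blast
      have "lam = of_nat (r * (Suc k + 1))" using k(2) by (simp add: algebra_simps)
      thus ?thesis using k by (intro exI[of _ "Suc k"], auto)
    qed
  qed
qed

end


lemma smith_chain: assumes S: "in_Smith_form S" and Sc: "S \<in> carrier_mat p p"
  shows "i \<le> j \<Longrightarrow> j < p \<Longrightarrow> S $$ (i,i) dvd S $$ (j,j)"
proof (induction j)
  case 0 thus ?case by simp
next
  case (Suc j)
  show ?case
  proof (cases "i = Suc j")
    case True thus ?thesis by simp
  next
    case False
    hence "i \<le> j" using Suc.prems by simp
    hence "S $$ (i,i) dvd S $$ (j,j)" using Suc.IH Suc.prems by simp
    moreover have "S $$ (j,j) dvd S $$ (Suc j, Suc j)"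
      using S Sc Suc.prems unfolding in_Smith_form_def by auto
    ultimately show ?thesis by (rule dvd_trans)
  qed
qed

lemma inv_det_unit: fixes P :: "'a::comm_ring_1 mat"
  assumes P: "P \<in> carrier_mat p p" and inv: "invertible_mat P" shows "det P dvd 1"
proof -
  obtain B where B: "P * B = 1\<^sub>m p" "B * P = 1\<^sub>m (dim_row B)"
    using inv P unfolding invertible_mat_def inverts_mat_def by auto
  have Bc: "B \<in> carrier_mat p p"
  proof -
    have "dim_col B = p" using B(1) P by (metis carrier_matD(1) dim_col_mat(1) index_mult_mat(3) index_one_mat(3))
    moreover have "dim_row B = p" using B(2) P by (metis carrier_matD(2) index_mult_mat(3) index_one_mat(3))
    ultimately show ?thesis by auto
  qed
  have "det P * det B = 1" using det_mult[OF P Bc] B(1) by simp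
  thus ?thesis by (metis dvdI)
qed

lemma inv_ex: fixes P :: "'a::comm_ring_1 mat"
  assumes P: "P \<in> carrier_mat p p" and inv: "invertible_mat P"
  shows "\<exists>B. B \<in> carrier_mat p p \<and> P * B = 1\<^sub>m p \<and> B * P = 1\<^sub>m p"
proof -
  obtain B where B: "P * B = 1\<^sub>m p" "B * P = 1\<^sub>m (dim_row B)"
    using inv P unfolding invertible_mat_def inverts_mat_def by auto
  have "dim_col B = p" using B(1) P by (metis carrier_matD(1) dim_col_mat(1) index_mult_mat(3) index_one_mat(3))
  moreover have "dim_row B = p" using B(2) P by (metis carrier_matD(2) index_mult_mat(3) index_one_mat(3))
  ultimately show ?thesis using B by (intro exI[of _ B], auto)
qed

lemma mem_dvd_prod_list: "x \<in> set xs \<Longrightarrow> x dvd prod_list (xs::'a::comm_monoid_mult list)"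
  by (induction xs) (auto intro: dvd_mult2 dvd_mult)

definition Mt :: "int mat \<Rightarrow> int poly mat" where
  "Mt A = map_mat (\<lambda>a. [:a:]) A + [:0, 1:] \<cdot>\<^sub>m 1\<^sub>m (dim_row A)"

lemma Mt_char: assumes A: "A \<in> carrier_mat p p" shows "Mt A = char_poly_matrix (- A)"
  unfolding Mt_def char_poly_matrix_def using A by (intro eq_matI, auto)

lemma det_Mt_lead: assumes A: "A \<in> carrier_mat p p" shows "lead_coeff (det (Mt A)) = 1"
proof -
  have "-A \<in> carrier_mat p p" using A by simp
  from degree_monic_char_poly[OF this] show ?thesis
    unfolding Mt_char[OF A] char_poly_def by simp
qed

lemma lead_unit: fixes P Q :: "int poly mat"
  assumes P: "P \<in> carrier_mat p p" and Q: "Q \<in> carrier_mat p p"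
    and iP: "invertible_mat P" and iQ: "invertible_mat Q"
    and A: "A \<in> carrier_mat p p"
    and S: "in_Smith_form (P * Mt A * Q)" and j: "j < p"
  shows "is_unit (lead_coeff ((P * Mt A * Q) $$ (j,j)))"
proof -
  define S where "S = P * Mt A * Q"
  have M: "Mt A \<in> carrier_mat p p" using A unfolding Mt_def by auto
  have Sc: "S \<in> carrier_mat p p" unfolding S_def using P M Q by auto
  have ut: "upper_triangular S" using S Sc unfolding S_def[symmetric] in_Smith_form_def upper_triangular_def
    by auto
  have "det S = prod_list (diag_mat S)" by (rule det_upper_triangular[OF ut Sc])
  moreover have "S $$ (j,j) \<in> set (diag_mat S)" using j Sc unfolding diag_mat_def by auto
  ultimately have dv: "S $$ (j,j) dvd det S" by (metis mem_dvd_prod_list)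
  have "det S = det P * det (Mt A) * det Q" unfolding S_def
    using det_mult[OF mult_carrier_mat[OF P M] Q] det_mult[OF P M] by simp
  then obtain u where u: "is_unit u" "det S = u * det (Mt A)"
    using inv_det_unit[OF P iP] inv_det_unit[OF Q iQ]
    by (metis is_unit_mult_iff mult.assoc mult.commute)
  from dv obtain g where g: "det S = S $$ (j,j) * g" by (metis dvdE)
  obtain cu where cu: "u = [:cu:]" "cu dvd 1" using u(1) is_unit_poly_iff by blast
  have lu: "is_unit (lead_coeff u)" using cu by simp
  have "lead_coeff (S $$ (j,j)) * lead_coeff g = lead_coeff u * lead_coeff (det (Mt A))"
    using g u(2) by (metis lead_coeff_mult)
  hence "lead_coeff (S $$ (j,j)) * lead_coeff g = lead_coeff u" using det_Mt_lead[OF A] by simp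
  hence "lead_coeff (S $$ (j,j)) dvd lead_coeff u" by (metis dvdI)
  thus ?thesis unfolding S_def[symmetric] using lu by (rule dvd_unit_imp_unit)
qed


context dposet begin

lemma pp_pos: "0 < pp n"
proof (induction n)
  case 0 show ?case using pp0 by simp
next
  case (Suc n)
  have "rank_set rk n \<noteq> {}" using Suc.IH by (metis card.empty less_irrefl)
  then obtain x where x: "x \<in> rank_set rk n" by blast
  have "0 < card {y. covers y x}" unfolding up_card[of x] using r_pos by linarith
  hence "{y. covers y x} \<noteq> {}" by (metis card.empty less_irrefl)
  then obtain y where y: "covers y x" by blast
  have "y \<in> rank_set rk (Suc n)" using cov_rank[OF y] x unfolding rank_set_def by simp
  hence "rank_set rk (Suc n) \<noteq> {}" by blast
  thus ?case using fin_rank[of "Suc n"] by (simp add: card_gt_0_iff)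
qed

lemma pp_mono: "pp n \<le> pp (Suc n)"
proof (rule inj_le[OF Uc_dims])
  fix b :: "complex vec" assume b: "b \<in> carrier_vec (pp n)" and Z: "Uc n *\<^sub>v b = 0\<^sub>v (pp (Suc n))"
  have Dz: "Dc n *\<^sub>v 0\<^sub>v (pp (Suc n)) = 0\<^sub>v (pp n)" using Dc_dims[of n] by (intro eq_vecI, auto simp: scalar_prod_def)
  have "Ac n *\<^sub>v b = 0\<^sub>v (pp n)" unfolding Ac_vec[OF b] Z by (rule Dz)
  thus "b = 0\<^sub>v (pp n)" by (rule kernel_triv[OF eigp b])
qed

lemma dp_nat: "delta_p rk (int m) = int (pp m) - (if m = 0 then 0 else int (pp (m - 1)))"
proof (cases "m = 0")
  case True thus ?thesis by (simp add: delta_p_def rank_size_def)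
next
  case False
  have a1: "rank_size rk (int m) = int (pp m)" by (simp add: rank_size_def)
  have a2: "int m - 1 = int (m - 1)" using False by simp
  have a3: "rank_size rk (int (m - 1)) = int (pp (m - 1))" by (simp add: rank_size_def)
  show ?thesis unfolding delta_p_def a2 a1 a3 using False by simp
qed

lemma key_int: assumes k: "1 \<le> k" "k \<le> Suc n"
  and b: "(pp (Suc n) - pp n + 1) + (if k = Suc n then 0 else pp (Suc n - k - 1)) \<le> pp (Suc n - k)"
  shows "int (pp (Suc n)) - int (pp n) + 1 \<le> delta_p rk (int (Suc n - k))"
proof -
  define m where "m = Suc n - k"
  have mk: "(k = Suc n) = (m = 0)" using k unfolding m_def by auto
  have m1: "Suc n - k - 1 = m - 1" unfolding m_def by simp
  have b': "(pp (Suc n) - pp n + 1) + (if m = 0 then 0 else pp (m - 1)) \<le> pp m"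
    using b unfolding mk m1 m_def[symmetric] .
  have mono: "pp n \<le> pp (Suc n)" by (rule pp_mono)
  have ic: "int (pp (Suc n) - pp n + 1) = int (pp (Suc n)) - int (pp n) + 1" using mono by simp
  have "int (pp (Suc n) - pp n + 1) + (if m = 0 then 0 else int (pp (m - 1))) \<le> int (pp m)"
    using b' by (cases "m = 0") simp_all
  hence "int (pp (Suc n)) - int (pp n) + 1 \<le> int (pp m) - (if m = 0 then 0 else int (pp (m - 1)))"
    unfolding ic by linarith
  thus ?thesis unfolding m_def[symmetric] dp_nat .
qed

lemma arith: assumes cond: "\<forall>n::int. \<forall>j::int. 1 \<le> n \<and> 1 \<le> j \<and> j \<le> n \<longrightarrow>
           delta_p rk n \<ge> delta_p rk (n - j - (if r = 1 then 1 else 0))"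
 and k: "1 \<le> k" "k \<le> Suc n"
 and key: "int (pp (Suc n)) - int (pp n) + 1 \<le> delta_p rk (int (Suc n - k))"
 shows "r = 1 \<and> k = 1"
proof -
  have "delta_p rk (int (Suc n)) = int (pp (Suc n)) - (if Suc n = 0 then 0 else int (pp (Suc n - 1)))"
    by (rule dp_nat)
  hence dN: "delta_p rk (int (Suc n)) = int (pp (Suc n)) - int (pp n)" by simp
  show ?thesis
  proof (cases "r = 1")
    case False
    have c1: "1 \<le> int (Suc n) \<and> 1 \<le> int k \<and> int k \<le> int (Suc n)" using k by linarith
    have arg: "int (Suc n) - int k - (if r = 1 then 1 else 0) = int (Suc n - k)"
      using False k by (simp add: of_nat_diff)
    have "delta_p rk (int (Suc n)) \<ge> delta_p rk (int (Suc n - k))"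
      using cond[rule_format, OF c1] unfolding arg .
    thus ?thesis using key dN by linarith
  next
    case True
    show ?thesis
    proof (rule ccontr)
      assume "\<not> (r = 1 \<and> k = 1)"
      hence k2: "k \<ge> 2" using True k by simp
      have c1: "1 \<le> int (Suc n) \<and> 1 \<le> int k - 1 \<and> int k - 1 \<le> int (Suc n)" using k k2 by linarith
      have arg: "int (Suc n) - (int k - 1) - (if r = 1 then 1 else 0) = int (Suc n - k)"
        using True k by (simp add: of_nat_diff)
      have "delta_p rk (int (Suc n)) \<ge> delta_p rk (int (Suc n - k))"
        using cond[rule_format, OF c1] unfolding arg .
      thus False using key dN by linarith
    qed
  qed
qed

end


definition evc :: "complex \<Rightarrow> int poly \<Rightarrow> complex" where
  "evc z f = poly (map_poly complex_of_int f) z"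

interpretation evc_hom: comm_ring_hom "evc z" for z
  by (unfold_locales, auto simp: evc_def of_int_poly_hom.hom_add of_int_poly_hom.hom_mult)

lemma evc_const[simp]: "evc z [:a:] = of_int a" by (cases "a = 0") (simp_all add: evc_def map_poly_pCons)
lemma evc_lin[simp]: "evc z [:a, 1:] = of_int a + z" by (simp add: evc_def map_poly_pCons)
lemma evc_X[simp]: "evc z [:0, 1:] = z" by (simp add: evc_def)

lemma sum_pad: fixes f :: "nat \<Rightarrow> 'a::comm_monoid_add"
  assumes "p = j0 + c" and "\<And>j. j < j0 \<Longrightarrow> f j = 0"
  shows "(\<Sum>j\<in>{0..<p}. f j) = (\<Sum>j\<in>{0..<c}. f (j0 + j))"
proof -
  have "(\<Sum>j\<in>{0..<p}. f j) = (\<Sum>j\<in>{0..<j0}. f j) + (\<Sum>j\<in>{j0..<p}. f j)"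
    by (rule sum.atLeastLessThan_concat[symmetric], insert assms(1), auto)
  also have "(\<Sum>j\<in>{0..<j0}. f j) = 0" using assms(2) by simp
  also have "(\<Sum>j\<in>{j0..<p}. f j) = (\<Sum>j\<in>{0..<c}. f (j + j0))"
    using sum.shift_bounds_nat_ivl[of f 0 j0 c] assms(1) by (simp add: add.commute)
  finally show ?thesis by (simp add: add.commute)
qed

context dposet begin

lemma Mc_eq: "map_mat (evc z) (Mt (DU_mat rk N)) = Ac N + z \<cdot>\<^sub>m 1\<^sub>m (pp N)"
proof (rule eq_matI)
  fix i j assume ij: "i < dim_row (Ac N + z \<cdot>\<^sub>m 1\<^sub>m (pp N))" "j < dim_col (Ac N + z \<cdot>\<^sub>m 1\<^sub>m (pp N))"
  hence ij': "i < pp N" "j < pp N" using Ac_dims[of N] by auto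
  show "map_mat (evc z) (Mt (DU_mat rk N)) $$ (i,j) = (Ac N + z \<cdot>\<^sub>m 1\<^sub>m (pp N)) $$ (i,j)"
    using ij' DU_dims[of N] Ac_dims[of N] by (cases "i = j", simp_all add: Mt_def Ac_def)
qed (insert DU_dims[of N] Ac_dims[of N], auto simp: Mt_def)

lemma root: assumes cond: "\<forall>n::int. \<forall>j::int. 1 \<le> n \<and> 1 \<le> j \<and> j \<le> n \<longrightarrow>
           delta_p rk n \<ge> delta_p rk (n - j - (if r = 1 then 1 else 0))"
  and P: "P \<in> carrier_mat (pp (Suc n)) (pp (Suc n))" and Q: "Q \<in> carrier_mat (pp (Suc n)) (pp (Suc n))"
  and iP: "invertible_mat P" and iQ: "invertible_mat Q"
  and S: "in_Smith_form (P * Mt (DU_mat rk (Suc n)) * Q)"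
  and z: "evc z ((P * Mt (DU_mat rk (Suc n)) * Q) $$ (pp n - 1, pp n - 1)) = 0"
  shows "r = 1 \<and> z = -2"
proof -
  define N where "N = Suc n"
  define p where "p = pp N"
  define q where "q = pp n"
  define j0 where "j0 = q - 1"
  define c where "c = p - j0"
  define M where "M = Mt (DU_mat rk N)"
  define Sm where "Sm = P * M * Q"
  have Pc: "P \<in> carrier_mat p p" using P unfolding p_def N_def .
  have Qc: "Q \<in> carrier_mat p p" using Q unfolding p_def N_def .
  have Mc: "M \<in> carrier_mat p p" unfolding M_def Mt_def p_def using DU_dims[of N] by auto
  have Smc: "Sm \<in> carrier_mat p p" unfolding Sm_def using Pc Mc Qc by auto
  have q1: "1 \<le> q" using pp_pos[of n] unfolding q_def by simp
  have qp: "q \<le> p" using pp_mono[of n] unfolding q_def p_def N_def .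
  have pc: "p = j0 + c" unfolding c_def j0_def using q1 qp by simp
  have c0: "0 < c" unfolding c_def j0_def using q1 qp by simp
  have Sm_smith: "in_Smith_form Sm" using S unfolding Sm_def M_def N_def .
  have zj0: "evc z (Sm $$ (j0,j0)) = 0" using z unfolding Sm_def M_def N_def j0_def q_def .
  have zj: "evc z (Sm $$ (j,j)) = 0" if j: "j0 \<le> j" "j < p" for j
  proof -
    have "Sm $$ (j0,j0) dvd Sm $$ (j,j)" by (rule smith_chain[OF Sm_smith Smc j])
    hence "evc z (Sm $$ (j0,j0)) dvd evc z (Sm $$ (j,j))" by (rule evc_hom.hom_dvd)
    thus ?thesis using zj0 by simp
  qed
  have offd: "Sm $$ (i,j) = 0" if "i < p" "j < p" "i \<noteq> j" for i j
    using Sm_smith Smc that unfolding in_Smith_form_def by auto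
  define Pz where "Pz = map_mat (evc z) P"
  define Qz where "Qz = map_mat (evc z) Q"
  define Mz where "Mz = map_mat (evc z) M"
  define Sz where "Sz = map_mat (evc z) Sm"
  have Pzc: "Pz \<in> carrier_mat p p" unfolding Pz_def using Pc by simp
  have Qzc: "Qz \<in> carrier_mat p p" unfolding Qz_def using Qc by simp
  have Mzc: "Mz \<in> carrier_mat p p" unfolding Mz_def using Mc by simp
  have Szc: "Sz \<in> carrier_mat p p" unfolding Sz_def using Smc by simp
  have Sz_eq: "Sz = Pz * Mz * Qz" unfolding Sz_def Sm_def Pz_def Mz_def Qz_def
    using evc_hom.mat_hom_mult[OF mult_carrier_mat[OF Pc Mc] Qc] evc_hom.mat_hom_mult[OF Pc Mc] by simp
  have Mz_eq: "Mz = Ac N + z \<cdot>\<^sub>m 1\<^sub>m p" unfolding Mz_def M_def p_def by (rule Mc_eq)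
  obtain Bq where Bq: "Bq \<in> carrier_mat p p" "Q * Bq = 1\<^sub>m p" "Bq * Q = 1\<^sub>m p" using inv_ex[OF Qc iQ] by blast
  obtain Bp where Bp: "Bp \<in> carrier_mat p p" "P * Bp = 1\<^sub>m p" "Bp * P = 1\<^sub>m p" using inv_ex[OF Pc iP] by blast
  define Bqz where "Bqz = map_mat (evc z) Bq"
  define Bpz where "Bpz = map_mat (evc z) Bp"
  have Bqzc: "Bqz \<in> carrier_mat p p" unfolding Bqz_def using Bq by simp
  have Bpzc: "Bpz \<in> carrier_mat p p" unfolding Bpz_def using Bp by simp
  have BQ: "Bqz * Qz = 1\<^sub>m p" unfolding Bqz_def Qz_def
    using evc_hom.mat_hom_mult[OF Bq(1) Qc] Bq(3) evc_hom.mat_hom_one by metis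
  have BP: "Bpz * Pz = 1\<^sub>m p" unfolding Bpz_def Pz_def
    using evc_hom.mat_hom_mult[OF Bp(1) Pc] Bp(3) evc_hom.mat_hom_one by metis
  have MQ: "Mz * Qz = Bpz * Sz"
  proof -
    have "Bpz * Sz = Bpz * (Pz * Mz * Qz)" unfolding Sz_eq ..
    also have "\<dots> = (Bpz * Pz) * Mz * Qz"
      using Bpzc Pzc Mzc Qzc by (simp add: assoc_mult_mat[of _ p p _ p _ p])
    also have "\<dots> = Mz * Qz" unfolding BP using Mzc by simp
    finally show ?thesis by simp
  qed
  define pad where "pad = (\<lambda>a::complex vec. vec p (\<lambda>j. if j0 \<le> j then a $ (j - j0) else 0))"
  have padc: "pad a \<in> carrier_vec p" for a unfolding pad_def by simp
  define V where "V = mat p c (\<lambda>(i,j). Qz $$ (i, j0 + j))"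
  have Vc: "V \<in> carrier_mat p c" unfolding V_def by simp
  have Va: "V *\<^sub>v a = Qz *\<^sub>v pad a" if a: "a \<in> carrier_vec c" for a
  proof (rule eq_vecI)
    fix i assume "i < dim_vec (Qz *\<^sub>v pad a)" hence i: "i < p" using Qzc by simp
    have "(Qz *\<^sub>v pad a) $ i = (\<Sum>j\<in>{0..<p}. Qz $$ (i,j) * pad a $ j)"
      using i Qzc padc[of a] by (simp add: scalar_prod_def)
    also have "\<dots> = (\<Sum>j\<in>{0..<c}. Qz $$ (i, j0 + j) * pad a $ (j0 + j))"
      by (rule sum_pad[OF pc], insert pc, simp add: pad_def)
    also have "\<dots> = (\<Sum>j\<in>{0..<c}. V $$ (i,j) * a $ j)"
      by (rule sum.cong, insert pc i, auto simp: pad_def V_def)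
    also have "\<dots> = (V *\<^sub>v a) $ i" using i Vc a by (simp add: scalar_prod_def)
    finally show "(V *\<^sub>v a) $ i = (Qz *\<^sub>v pad a) $ i" by simp
  qed (use Vc Qzc in simp)
  have inj: "\<forall>a\<in>carrier_vec c. V *\<^sub>v a = 0\<^sub>v p \<longrightarrow> a = 0\<^sub>v c"
  proof (intro ballI impI)
    fix a :: "complex vec" assume a: "a \<in> carrier_vec c" and Z: "V *\<^sub>v a = 0\<^sub>v p"
    have "pad a = Bqz *\<^sub>v (Qz *\<^sub>v pad a)"
      using assoc_mult_mat_vec[OF Bqzc Qzc padc[of a]] BQ padc[of a] by simp
    also have "Qz *\<^sub>v pad a = 0\<^sub>v p" using Z Va[OF a] by simp
    also have "Bqz *\<^sub>v 0\<^sub>v p = 0\<^sub>v p" using Bqzc by (intro eq_vecI, auto simp: scalar_prod_def)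
    finally have pz: "pad a = 0\<^sub>v p" .
    show "a = 0\<^sub>v c"
    proof (rule eq_vecI)
      fix j assume "j < dim_vec (0\<^sub>v c :: complex vec)" hence j: "j < c" by simp
      have "pad a $ (j0 + j) = 0" using pz j pc by simp
      thus "a $ j = 0\<^sub>v c $ j" using j pc unfolding pad_def by simp
    qed (use a in simp)
  qed
  have Szpad: "Sz *\<^sub>v pad a = 0\<^sub>v p" for a
  proof (rule eq_vecI)
    fix i assume "i < dim_vec (0\<^sub>v p :: complex vec)" hence i: "i < p" by simp
    have "(Sz *\<^sub>v pad a) $ i = (\<Sum>j\<in>{0..<p}. Sz $$ (i,j) * pad a $ j)"
      using i Szc padc[of a] by (simp add: scalar_prod_def)
    also have "\<dots> = 0"
    proof (rule sum.neutral, intro ballI)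
      fix j assume "j \<in> {0..<p}" hence j: "j < p" by simp
      show "Sz $$ (i,j) * pad a $ j = 0"
      proof (cases "i = j")
        case False thus ?thesis using offd[OF i j] i j Smc unfolding Sz_def by simp
      next
        case True
        show ?thesis
        proof (cases "j0 \<le> j")
          case True2: True
          thus ?thesis using zj[OF True2 j] True i j Smc unfolding Sz_def by simp
        next
          case False thus ?thesis using j unfolding pad_def by simp
        qed
      qed
    qed
    finally show "(Sz *\<^sub>v pad a) $ i = 0\<^sub>v p $ i" using i by simp
  qed (use Szc in simp)
  have eig: "\<forall>a\<in>carrier_vec c. Ac N *\<^sub>v (V *\<^sub>v a) = (- z) \<cdot>\<^sub>v (V *\<^sub>v a)"
  proof
    fix a :: "complex vec" assume a: "a \<in> carrier_vec c"
    define w where "w = V *\<^sub>v a"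
    have wc: "w \<in> carrier_vec p" unfolding w_def by (rule mv_car[OF Vc])
    have "Mz *\<^sub>v w = (Mz * Qz) *\<^sub>v pad a" unfolding w_def Va[OF a]
      using assoc_mult_mat_vec[OF Mzc Qzc padc[of a]] by simp
    also have "\<dots> = Bpz *\<^sub>v (Sz *\<^sub>v pad a)" unfolding MQ
      by (rule assoc_mult_mat_vec[OF Bpzc Szc padc])
    also have "\<dots> = 0\<^sub>v p" unfolding Szpad using Bpzc by (intro eq_vecI, auto simp: scalar_prod_def)
    finally have Mw: "Mz *\<^sub>v w = 0\<^sub>v p" .
    have Acc: "Ac N \<in> carrier_mat p p" unfolding p_def by (rule Ac_dims)
    have "Mz *\<^sub>v w = Ac N *\<^sub>v w + (z \<cdot>\<^sub>m 1\<^sub>m p) *\<^sub>v w" unfolding Mz_eq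
      by (rule add_mult_distrib_mat_vec[OF Acc _ wc], simp)
    also have "(z \<cdot>\<^sub>m 1\<^sub>m p) *\<^sub>v w = z \<cdot>\<^sub>v (1\<^sub>m p *\<^sub>v w)" using wc by auto
    also have "1\<^sub>m p *\<^sub>v w = w" using wc by simp
    finally have "Ac N *\<^sub>v w + z \<cdot>\<^sub>v w = 0 \<cdot>\<^sub>v w" using Mw zero_smult_v[OF wc] by simp
    hence "Ac N *\<^sub>v w = (0 - z) \<cdot>\<^sub>v w" by (rule vec_solve[OF mv_car[OF Acc] wc])
    thus "Ac N *\<^sub>v (V *\<^sub>v a) = (- z) \<cdot>\<^sub>v (V *\<^sub>v a)" unfolding w_def by simp
  qed
  have Vc': "V \<in> carrier_mat (pp N) c" using Vc unfolding p_def .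
  have inj': "\<forall>a\<in>carrier_vec c. V *\<^sub>v a = 0\<^sub>v (pp N) \<longrightarrow> a = 0\<^sub>v c" using inj unfolding p_def .
  note H = eigp[of N, unfolded EIGP_def, THEN spec[of _ "-z"], THEN spec[of _ c], THEN spec[of _ V],
        THEN mp, OF Vc', THEN mp, OF c0, THEN mp, OF inj', THEN mp, OF eig]
  from H obtain k where k: "k \<le> N" "- z = of_nat (r * (k+1))"
    "c + (if k = N then 0 else pp (N - k - 1)) \<le> pp (N - k)" by blast
  have cc: "c = pp (Suc n) - pp n + 1" unfolding c_def p_def j0_def q_def N_def using q1 qp
    unfolding q_def p_def N_def by simp
  have k1: "1 \<le> k"
  proof (rule ccontr)
    assume "\<not> 1 \<le> k" hence "k = 0" by simp
    hence "c + pp n \<le> pp (Suc n)" using k(3) unfolding N_def by simp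
    thus False using cc qp unfolding q_def p_def N_def by simp
  qed
  have b: "(pp (Suc n) - pp n + 1) + (if k = Suc n then 0 else pp (Suc n - k - 1)) \<le> pp (Suc n - k)"
    using k(3) unfolding cc N_def .
  have "r = 1 \<and> k = 1" by (rule arith[OF cond k1 k(1)[unfolded N_def] key_int[OF k1 k(1)[unfolded N_def] b]])
  moreover from this k(2) have "- z = 2" by simp
  moreover from this have "z = -2" by (metis minus_minus)
  ultimately show ?thesis by simp
qed

end


lemma prod_lin_root: "a \<in> set as \<Longrightarrow> poly (\<Prod>b\<leftarrow>as. [:-b, 1:]) (a::complex) = 0"
  by (induction as) auto

lemma prod_lin_one: "(\<forall>a\<in>set as. poly [:-a, 1:] x = (1::complex)) \<Longrightarrow> poly (\<Prod>b\<leftarrow>as. [:-b, 1:]) x = 1"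
  by (induction as) auto

lemma int_unit_sq: "(x::int) dvd 1 \<Longrightarrow> x * x = 1"
  by (metis abs_mult_self_eq mult.right_neutral zdvd1_eq)

context dposet begin

lemma value_unit: assumes cond: "\<forall>n::int. \<forall>j::int. 1 \<le> n \<and> 1 \<le> j \<and> j \<le> n \<longrightarrow>
           delta_p rk n \<ge> delta_p rk (n - j - (if r = 1 then 1 else 0))"
  and P: "P \<in> carrier_mat (pp (Suc n)) (pp (Suc n))" and Q: "Q \<in> carrier_mat (pp (Suc n)) (pp (Suc n))"
  and iP: "invertible_mat P" and iQ: "invertible_mat Q"
  and S: "in_Smith_form (P * Mt (DU_mat rk (Suc n)) * Q)"
  shows "poly ((P * Mt (DU_mat rk (Suc n)) * Q) $$ (pp n - 1, pp n - 1)) (- int r) dvd 1"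
proof -
  define e where "e = (P * Mt (DU_mat rk (Suc n)) * Q) $$ (pp n - 1, pp n - 1)"
  define E where "E = map_poly complex_of_int e"
  have j0: "pp n - 1 < pp (Suc n)" using pp_pos[of n] pp_mono[of n] by simp
  have lu: "is_unit (lead_coeff e)" unfolding e_def
    by (rule lead_unit[OF P Q iP iQ DU_dims S j0])
  obtain as where as: "smult (coeff E (degree E)) (\<Prod>a\<leftarrow>as. [:- a, 1:]) = E"
    using fundamental_theorem_algebra_factorized[of E] by blast
  have roots: "poly [:-a, 1:] (- of_nat r) = (1::complex)" if a: "a \<in> set as" for a
  proof -
    have "poly E a = coeff E (degree E) * poly (\<Prod>a\<leftarrow>as. [:- a, 1:]) a" using as by (metis poly_smult)
    hence "poly E a = 0" using prod_lin_root[OF a] by simp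
    hence "evc a e = 0" unfolding evc_def E_def .
    hence "r = 1 \<and> a = -2" using root[OF cond P Q iP iQ S] unfolding e_def by blast
    thus ?thesis by simp
  qed
  have "poly E (- of_nat r) = coeff E (degree E) * poly (\<Prod>a\<leftarrow>as. [:- a, 1:]) (- of_nat r)"
    using as by (metis poly_smult)
  hence "poly E (- of_nat r) = coeff E (degree E)"
    using prod_lin_one[of as "- of_nat r"] roots by simp
  moreover have "poly E (of_int (- int r)) = of_int (poly e (- int r))"
    unfolding E_def by (rule of_int_hom.poly_map_poly)
  moreover have "(of_int (- int r) :: complex) = - of_nat r" by simp
  moreover have "coeff E (degree E) = of_int (lead_coeff e)" unfolding E_def by simp
  ultimately have "poly e (- int r) = lead_coeff e" by simp
  thus ?thesis using lu unfolding e_def by simp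
qed

end


lemma left_inv_int: fixes A B :: "int mat"
  assumes A: "A \<in> carrier_mat q q" and B: "B \<in> carrier_mat q q" and AB: "A * B = 1\<^sub>m q"
  shows "B * A = 1\<^sub>m q"
proof -
  let ?h = "of_int :: int \<Rightarrow> rat"
  have A': "map_mat ?h A \<in> carrier_mat q q" using A by simp
  have B': "map_mat ?h B \<in> carrier_mat q q" using B by simp
  have "map_mat ?h A * map_mat ?h B = 1\<^sub>m q"
    using of_int_hom.mat_hom_mult[OF A B] AB of_int_hom.mat_hom_one by metis
  hence "map_mat ?h B * map_mat ?h A = 1\<^sub>m q" by (rule mat_mult_left_right_inverse[OF A' B'])
  hence "map_mat ?h (B * A) = map_mat ?h (1\<^sub>m q)"
    using of_int_hom.mat_hom_mult[OF B A] of_int_hom.mat_hom_one by metis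
  thus ?thesis by (rule of_int_hom.mat_hom_inj)
qed

lemma block: fixes X Y :: "int mat"
  assumes X: "X \<in> carrier_mat p q" and Y: "Y \<in> carrier_mat q p" and qp: "q \<le> p"
  and off: "\<And>i j. i < p \<Longrightarrow> j < p \<Longrightarrow> i \<noteq> j \<Longrightarrow> (X * Y) $$ (i,j) = 0"
  and un: "\<And>j. j < q \<Longrightarrow> (X * Y) $$ (j,j) * (X * Y) $$ (j,j) = 1"
  shows "\<exists>Qf. Qf \<in> carrier_mat q q \<and> invertible_mat Qf \<and> X * Qf = mat p q (\<lambda>(i,j). if i = j then 1 else 0)"
proof -
  define s where "s = (\<lambda>j. (X * Y) $$ (j,j))"
  define Qf where "Qf = mat q q (\<lambda>(k,j). Y $$ (k,j) * s j)"
  have Qfc: "Qf \<in> carrier_mat q q" unfolding Qf_def by simp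
  have XQ_entry: "(X * Qf) $$ (i,j) = (if i = j then 1 else 0)" if ij: "i < p" "j < q" for i j
  proof -
    have "(X * Qf) $$ (i,j) = (\<Sum>k\<in>{0..<q}. X $$ (i,k) * (Y $$ (k,j) * s j))"
      using ij X Qfc by (simp add: scalar_prod_def Qf_def)
    also have "\<dots> = (\<Sum>k\<in>{0..<q}. X $$ (i,k) * Y $$ (k,j)) * s j"
      by (simp add: sum_distrib_right mult.assoc)
    also have "(\<Sum>k\<in>{0..<q}. X $$ (i,k) * Y $$ (k,j)) = (X * Y) $$ (i,j)"
      using ij X Y qp by (simp add: scalar_prod_def)
    finally have e: "(X * Qf) $$ (i,j) = (X * Y) $$ (i,j) * s j" .
    show ?thesis
    proof (cases "i = j")
      case True thus ?thesis using e un[OF ij(2)] unfolding s_def by simp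
    next
      case False thus ?thesis using e off[OF ij(1) _ False] ij qp by simp
    qed
  qed
  have XQ: "X * Qf = mat p q (\<lambda>(i,j). if i = j then 1 else 0)"
    by (rule eq_matI, insert X Qfc XQ_entry, auto)
  define X1 where "X1 = mat q q (\<lambda>(i,j). X $$ (i,j))"
  have X1c: "X1 \<in> carrier_mat q q" unfolding X1_def by simp
  have X1Q: "X1 * Qf = 1\<^sub>m q"
  proof (rule eq_matI)
    fix i j assume ij: "i < dim_row (1\<^sub>m q :: int mat)" "j < dim_col (1\<^sub>m q :: int mat)"
    hence ij': "i < q" "j < q" by auto
    have "(X1 * Qf) $$ (i,j) = (X * Qf) $$ (i,j)"
      using ij' X X1c Qfc qp by (simp add: scalar_prod_def X1_def)
    also have "\<dots> = (if i = j then 1 else 0)" using XQ_entry[of i j] ij' qp by simp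
    finally show "(X1 * Qf) $$ (i,j) = 1\<^sub>m q $$ (i,j)" using ij' by simp
  qed (insert X1c Qfc, auto)
  have QX1: "Qf * X1 = 1\<^sub>m q" by (rule left_inv_int[OF X1c Qfc X1Q])
  have "invertible_mat Qf" unfolding invertible_mat_def inverts_mat_def
    using Qfc X1c QX1 X1Q by (intro conjI exI[of _ X1], auto)
  thus ?thesis using Qfc XQ by blast
qed


context dposet begin

lemma final: assumes cond: "\<forall>n::int. \<forall>j::int. 1 \<le> n \<and> 1 \<le> j \<and> j \<le> n \<longrightarrow>
           delta_p rk n \<ge> delta_p rk (n - j - (if r = 1 then 1 else 0))"
  and sm: "has_Smith_form (map_mat (\<lambda>a. [:a:]) (DU_mat rk (Suc n)) + [:0, 1:] \<cdot>\<^sub>m 1\<^sub>m (pp (Suc n)))"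
  shows "\<exists>P Q. P \<in> carrier_mat (pp (Suc n)) (pp (Suc n)) \<and>
           Q \<in> carrier_mat (pp n) (pp n) \<and>
           invertible_mat P \<and> invertible_mat Q \<and>
           in_Smith_form (P * U_mat rk n * Q) \<and>
           (\<forall>i < min (pp (Suc n)) (pp n). (P * U_mat rk n * Q) $$ (i,i) \<in> {0, 1})"
proof -
  define p where "p = pp (Suc n)"
  define q where "q = pp n"
  define j0 where "j0 = q - 1"
  define M where "M = Mt (DU_mat rk (Suc n))"
  have Meq: "map_mat (\<lambda>a. [:a:]) (DU_mat rk (Suc n)) + [:0, 1:] \<cdot>\<^sub>m 1\<^sub>m (pp (Suc n)) = M"
    unfolding M_def Mt_def using DU_dims[of "Suc n"] by simp
  have Mc: "M \<in> carrier_mat p p" unfolding M_def Mt_def p_def using DU_dims[of "Suc n"] by auto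
  from sm[unfolded Meq has_Smith_form_def] obtain P Q where
    PQ: "P \<in> carrier_mat (dim_row M) (dim_row M)" "Q \<in> carrier_mat (dim_col M) (dim_col M)"
      "invertible_mat P" "invertible_mat Q" "in_Smith_form (P * M * Q)" by blast
  have Pc: "P \<in> carrier_mat p p" using PQ(1) Mc by simp
  have Qc: "Q \<in> carrier_mat p p" using PQ(2) Mc by simp
  have Pc': "P \<in> carrier_mat (pp (Suc n)) (pp (Suc n))" using Pc unfolding p_def .
  have Qc': "Q \<in> carrier_mat (pp (Suc n)) (pp (Suc n))" using Qc unfolding p_def .
  define Sm where "Sm = P * M * Q"
  have Smc: "Sm \<in> carrier_mat p p" unfolding Sm_def using Pc Mc Qc by auto
  have Ssm: "in_Smith_form Sm" using PQ(5) unfolding Sm_def .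
  have q1: "1 \<le> q" using pp_pos[of n] unfolding q_def by simp
  have qp: "q \<le> p" using pp_mono[of n] unfolding q_def p_def .
  have j0p: "j0 < p" unfolding j0_def using q1 qp by simp
  have e0: "poly (Sm $$ (j0,j0)) (- int r) dvd 1"
    using value_unit[OF cond Pc' Qc' PQ(3,4) PQ(5)[unfolded M_def]] unfolding Sm_def M_def j0_def q_def .
  define g where "g = (\<lambda>f::int poly. poly f (- int r))"
  interpret G: comm_ring_hom g unfolding g_def by (unfold_locales, auto)
  have UDc: "U_mat rk n * D_mat rk n \<in> carrier_mat p p" unfolding p_def using mult_carrier_mat[OF U_dims D_dims] .
  have M0: "map_mat g M = U_mat rk n * D_mat rk n"
  proof (rule eq_matI)
    fix i j assume ij: "i < dim_row (U_mat rk n * D_mat rk n)" "j < dim_col (U_mat rk n * D_mat rk n)"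
    hence ij': "i < p" "j < p" using UDc by auto
    have "M $$ (i,j) = [:DU_mat rk (Suc n) $$ (i,j):] + (if i = j then [:0,1:] else 0)"
      unfolding M_def Mt_def using ij' DU_dims[of "Suc n"] unfolding p_def by simp
    also have "DU_mat rk (Suc n) $$ (i,j) = (U_mat rk n * D_mat rk n) $$ (i,j) + (if i = j then int r else 0)"
      unfolding DU_Suc using ij' UDc by (simp add: p_def)
    finally have "M $$ (i,j) = [:(U_mat rk n * D_mat rk n) $$ (i,j) + (if i = j then int r else 0):] + (if i = j then [:0,1:] else 0)" .
    hence "g (M $$ (i,j)) = (U_mat rk n * D_mat rk n) $$ (i,j)" unfolding g_def by (cases "i = j", simp_all)
    thus "map_mat g M $$ (i,j) = (U_mat rk n * D_mat rk n) $$ (i,j)" using ij' Mc by simp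
  qed (insert Mc UDc, auto)
  define P0 where "P0 = map_mat g P"
  define Q0 where "Q0 = map_mat g Q"
  have P0c: "P0 \<in> carrier_mat p p" unfolding P0_def using Pc by simp
  have Q0c: "Q0 \<in> carrier_mat p p" unfolding Q0_def using Qc by simp
  have S0: "map_mat g Sm = P0 * (U_mat rk n * D_mat rk n) * Q0" unfolding Sm_def P0_def Q0_def M0[symmetric]
    using G.mat_hom_mult[OF mult_carrier_mat[OF Pc Mc] Qc] G.mat_hom_mult[OF Pc Mc] by simp
  have Uc: "U_mat rk n \<in> carrier_mat p q" using U_dims unfolding p_def q_def .
  have Dc: "D_mat rk n \<in> carrier_mat q p" using D_dims unfolding p_def q_def .
  define X where "X = P0 * U_mat rk n"
  define Y where "Y = D_mat rk n * Q0"
  have Xc: "X \<in> carrier_mat p q" unfolding X_def using P0c Uc by auto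
  have Yc: "Y \<in> carrier_mat q p" unfolding Y_def using Dc Q0c by auto
  have XY: "X * Y = map_mat g Sm"
  proof -
    have "X * Y = P0 * U_mat rk n * (D_mat rk n * Q0)" unfolding X_def Y_def ..
    also have "\<dots> = P0 * (U_mat rk n * (D_mat rk n * Q0))" by (rule assoc_mult_mat[OF P0c Uc mult_carrier_mat[OF Dc Q0c]])
    also have "U_mat rk n * (D_mat rk n * Q0) = U_mat rk n * D_mat rk n * Q0" by (rule assoc_mult_mat[OF Uc Dc Q0c, symmetric])
    also have "P0 * (U_mat rk n * D_mat rk n * Q0) = P0 * (U_mat rk n * D_mat rk n) * Q0"
      by (rule assoc_mult_mat[OF P0c UDc Q0c, symmetric])
    finally show ?thesis unfolding S0 .
  qed
  have off: "(X * Y) $$ (i,j) = 0" if "i < p" "j < p" "i \<noteq> j" for i j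
  proof -
    have "Sm $$ (i,j) = 0" using Ssm Smc that unfolding in_Smith_form_def by auto
    thus ?thesis unfolding XY using that Smc by simp
  qed
  have un: "(X * Y) $$ (j,j) * (X * Y) $$ (j,j) = 1" if j: "j < q" for j
  proof -
    have "Sm $$ (j,j) dvd Sm $$ (j0,j0)" by (rule smith_chain[OF Ssm Smc], insert j j0p, auto simp: j0_def)
    hence "g (Sm $$ (j,j)) dvd g (Sm $$ (j0,j0))" by (rule G.hom_dvd)
    hence "g (Sm $$ (j,j)) dvd 1" using e0 unfolding g_def by (metis dvd_trans)
    hence "g (Sm $$ (j,j)) * g (Sm $$ (j,j)) = 1" by (rule int_unit_sq)
    thus ?thesis unfolding XY using j qp Smc by simp
  qed
  obtain Qf where Qf: "Qf \<in> carrier_mat q q" "invertible_mat Qf"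
    "X * Qf = mat p q (\<lambda>(i,j). if i = j then 1 else 0)"
    using block[OF Xc Yc qp off un] by blast
  obtain Bp where Bp: "Bp \<in> carrier_mat p p" "P * Bp = 1\<^sub>m p" "Bp * P = 1\<^sub>m p" using inv_ex[OF Pc PQ(3)] by blast
  have iP0: "invertible_mat P0"
  proof -
    have B0c: "map_mat g Bp \<in> carrier_mat p p" using Bp by simp
    have "P0 * map_mat g Bp = 1\<^sub>m p" unfolding P0_def using G.mat_hom_mult[OF Pc Bp(1)] Bp(2) G.mat_hom_one by metis
    moreover have "map_mat g Bp * P0 = 1\<^sub>m p" unfolding P0_def using G.mat_hom_mult[OF Bp(1) Pc] Bp(3) G.mat_hom_one by metis
    ultimately show ?thesis unfolding invertible_mat_def inverts_mat_def using P0c B0c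
      by (intro conjI exI[of _ "map_mat g Bp"], auto)
  qed
  define R where "R = mat p q (\<lambda>(i,j). if i = j then (1::int) else 0)"
  have PUQ: "P0 * U_mat rk n * Qf = R" using Qf(3) unfolding X_def R_def .
  have RS: "in_Smith_form R" unfolding in_Smith_form_def R_def by auto
  have Rd: "\<forall>i < min p q. R $$ (i,i) \<in> {0, 1}" unfolding R_def by auto
  show ?thesis
    apply (rule exI[of _ P0], rule exI[of _ Qf])
    using P0c Qf(1,2) iP0 RS Rd unfolding PUQ p_def q_def by blast
qed

end

theorem proposition2p5:
  fixes r :: nat and rk :: "'a::order \<Rightarrow> nat"
  assumes "differential_poset r rk"
    and "\<forall>n::int. \<forall>j::int. 1 \<le> n \<and> 1 \<le> j \<and> j \<le> n \<longrightarrow>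
           delta_p rk n \<ge> delta_p rk (n - j - (if r = 1 then 1 else 0))"
    and "\<forall>n. has_Smith_form
           (map_mat (\<lambda>a. [:a:]) (DU_mat rk n) + [:0, 1:] \<cdot>\<^sub>m 1\<^sub>m (card (rank_set rk n)))"
  shows "\<forall>n. \<exists>P Q. P \<in> carrier_mat (card (rank_set rk (Suc n))) (card (rank_set rk (Suc n))) \<and>
           Q \<in> carrier_mat (card (rank_set rk n)) (card (rank_set rk n)) \<and>
           invertible_mat P \<and> invertible_mat Q \<and>
           in_Smith_form (P * U_mat rk n * Q) \<and>
           (\<forall>i < min (card (rank_set rk (Suc n))) (card (rank_set rk n)).
              (P * U_mat rk n * Q) $$ (i,i) \<in> {0, 1})"
proof
  fix n
  interpret dposet r rk by (unfold_locales, rule assms(1))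
  show "\<exists>P Q. P \<in> carrier_mat (card (rank_set rk (Suc n))) (card (rank_set rk (Suc n))) \<and>
           Q \<in> carrier_mat (card (rank_set rk n)) (card (rank_set rk n)) \<and>
           invertible_mat P \<and> invertible_mat Q \<and>
           in_Smith_form (P * U_mat rk n * Q) \<and>
           (\<forall>i < min (card (rank_set rk (Suc n))) (card (rank_set rk n)).
              (P * U_mat rk n * Q) $$ (i,i) \<in> {0, 1})"
    by (rule final[OF assms(2) assms(3)[rule_format, of "Suc n"]])
qed

end
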